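(* Let $a\in(0,1)$ and let $(X_t)_{t=0,\dots,n}$ be a stationary Markov chain generated by the copula $C(u,v)=a\min(u,v)+(1-a)\max(u+v-1,0)$ and the uniform$(0,1)$ marginal distribution. Then: (i) the random variables $I(X_t=X_{t+1})$, $t=0,\dots,n-1$, are independent and identically distributed Bernoulli($a$) random variables; (ii) $Y_n=\frac1n\sum_{t=0}^{n-1}I(X_t=X_{t+1})$ is an unbiased and consistent estimator of $a$, and $Y_n$ satisfies the central limit theorem, i.e. $\sqrt n(Y_n-a)\to N(0,a(1-a))$ in distribution; (iii) the maximum likelihood estimator of $a$ (based on the likelihood $L(a)=\prod_{t=0}^{n-1}a^{Y_t}(1-a)^{1-Y_t}$, $Y_t=I(X_t=X_{t+1})$) is the method of moments estimator $Y_n$.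
   Context: A stationary Markov chain $(X_t)$ is generated by a copula $C$ and a marginal cdf $F$ if each $X_t$ has cdf $F$ and $P(X_t\le x,X_{t+1}\le y)=C(F(x),F(y))$ for all $x,y$. $I(\cdot)$ denotes the indicator of an event. *)

theory Defs
  imports "HOL-Probability.Probability"
begin

definition unif_cdf :: "real \<Rightarrow> real" where
  "unif_cdf x = max 0 (min 1 x)"

definition mix_copula :: "real \<Rightarrow> real \<Rightarrow> real \<Rightarrow> real" where
  "mix_copula a u v = a * min u v + (1 - a) * max (u + v - 1) 0"

definition past_algebra :: "'a measure \<Rightarrow> (nat \<Rightarrow> 'a \<Rightarrow> real) \<Rightarrow> nat \<Rightarrow> 'a measure" where
  "past_algebra M X t =
     vimage_algebra (space M) (\<lambda>\<omega>. \<lambda>i\<in>{..t}. X i \<omega>) (PiM {..t} (\<lambda>_. borel))"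

definition markov_chain :: "'a measure \<Rightarrow> (nat \<Rightarrow> 'a \<Rightarrow> real) \<Rightarrow> bool" where
  "markov_chain M X \<longleftrightarrow> prob_space M \<and> (\<forall>t. X t \<in> borel_measurable M) \<and>
     (\<forall>t. \<forall>B\<in>sets borel.
        AE \<omega> in M.
          real_cond_exp M (past_algebra M X t)
              (indicator {\<omega>\<in>space M. X (Suc t) \<omega> \<in> B}) \<omega>
        = real_cond_exp M (vimage_algebra (space M) (X t) borel)
              (indicator {\<omega>\<in>space M. X (Suc t) \<omega> \<in> B}) \<omega>)"

definition stationary :: "'a measure \<Rightarrow> (nat \<Rightarrow> 'a \<Rightarrow> real) \<Rightarrow> bool" where
  "stationary M X \<longleftrightarrow> (\<forall>k s.
     distr M (PiM {..k} (\<lambda>_. borel)) (\<lambda>\<omega>. \<lambda>i\<in>{..k}. X (s + i) \<omega>)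
   = distr M (PiM {..k} (\<lambda>_. borel)) (\<lambda>\<omega>. \<lambda>i\<in>{..k}. X i \<omega>))"

definition generated_by :: "'a measure \<Rightarrow> (nat \<Rightarrow> 'a \<Rightarrow> real)
    \<Rightarrow> (real \<Rightarrow> real \<Rightarrow> real) \<Rightarrow> (real \<Rightarrow> real) \<Rightarrow> bool" where
  "generated_by M X C F \<longleftrightarrow>
     (\<forall>t x. measure M {\<omega>\<in>space M. X t \<omega> \<le> x} = F x) \<and>
     (\<forall>t x y. measure M {\<omega>\<in>space M. X t \<omega> \<le> x \<and> X (Suc t) \<omega> \<le> y} = C (F x) (F y))"

definition eqind :: "(nat \<Rightarrow> 'a \<Rightarrow> real) \<Rightarrow> nat \<Rightarrow> 'a \<Rightarrow> real" where
  "eqind X t \<omega> = (if X t \<omega> = X (Suc t) \<omega> then 1 else 0)"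

definition Yn :: "(nat \<Rightarrow> 'a \<Rightarrow> real) \<Rightarrow> nat \<Rightarrow> 'a \<Rightarrow> real" where
  "Yn X n \<omega> = (\<Sum>t<n. eqind X t \<omega>) / real n"

definition likelihood :: "(nat \<Rightarrow> 'a \<Rightarrow> real) \<Rightarrow> nat \<Rightarrow> 'a \<Rightarrow> real \<Rightarrow> real" where
  "likelihood X n \<omega> b =
     (\<Prod>t<n. b ^ (if X t \<omega> = X (Suc t) \<omega> then 1 else 0)
               * (1 - b) ^ (1 - (if X t \<omega> = X (Suc t) \<omega> then 1 else 0)))"

end

theory Submission
  imports Defs
begin


lemma lik_form:
  "likelihood X n \<omega> b = b ^ card {t. t < n \<and> X t \<omega> = X (Suc t) \<omega>} * (1 - b) ^ (n - card {t. t < n \<and> X t \<omega> = X (Suc t) \<omega>})"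
proof (induction n)
  case 0
  then show ?case by (simp add: likelihood_def)
next
  case (Suc n)
  let ?S = "\<lambda>n. {t. t < n \<and> X t \<omega> = X (Suc t) \<omega>}"
  have fin: "finite (?S n)" by auto
  have le: "card (?S n) \<le> n"
    using card_mono[of "{..<n}" "?S n"] by auto
  show ?case
  proof (cases "X n \<omega> = X (Suc n) \<omega>")
    case True
    then have "?S (Suc n) = insert n (?S n)" by auto
    then have "card (?S (Suc n)) = Suc (card (?S n))" using fin by simp
    then show ?thesis using Suc True le
      by (simp add: likelihood_def Suc_diff_le)
  next
    case False
    then have "?S (Suc n) = ?S n" by (auto simp: less_Suc_eq)
    then show ?thesis using Suc False le
      by (simp add: likelihood_def Suc_diff_le)
  qed
qed

lemma Yn_form:
  "Yn X n \<omega> = real (card {t. t < n \<and> X t \<omega> = X (Suc t) \<omega>}) / real n"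
proof -
  have "(\<Sum>t<n. eqind X t \<omega>) = (\<Sum>t\<in>{t. t < n \<and> X t \<omega> = X (Suc t) \<omega>}. 1)"
    unfolding eqind_def by (rule sum.mono_neutral_cong_right) auto
  then show ?thesis unfolding Yn_def by simp
qed

lemma ln_strict: "0 < (x::real) \<Longrightarrow> x \<noteq> 1 \<Longrightarrow> ln x < x - 1"
proof -
  assume x: "0 < x" "x \<noteq> 1"
  have s: "sqrt x > 0" using x by simp
  have "ln x = 2 * ln (sqrt x)" using x by (simp add: ln_sqrt)
  also have "\<dots> \<le> 2 * (sqrt x - 1)" using ln_le_minus_one[OF s] by simp
  also have "\<dots> < x - 1"
  proof -
    have "sqrt x \<noteq> 1" using x by auto
    then have "(sqrt x - 1)^2 > 0" by simp
    then show ?thesis using x by (simp add: power2_eq_square algebra_simps)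
  qed
  finally show ?thesis .
qed

lemma bin_max:
  fixes k m :: nat and b :: real
  assumes n: "k + m > 0" and b: "0 \<le> b" "b \<le> 1" "b \<noteq> real k / real (k + m)"
  shows "b ^ k * (1 - b) ^ m < (real k / real (k+m)) ^ k * (1 - real k / real (k+m)) ^ m"
proof -
  define p where "p = real k / real (k+m)"
  have np: "real (k+m) > 0" using n by linarith
  have p1: "1 - p = real m / real (k+m)" unfolding p_def using np by (simp add: field_simps)
  show ?thesis
  proof (cases "k = 0")
    case True
    then have m: "m > 0" using n by simp
    have "b > 0" using b True by auto
    then have "(1 - b) ^ m < 1" using b m by (simp add: power_less_one_iff)
    then show ?thesis using True by simp
  next
    case k: False
    show ?thesis
    proof (cases "m = 0")
      case True
      then have "b < 1" using b k by auto
      then have "b ^ k < 1" using b k by (simp add: power_less_one_iff)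
      then show ?thesis using True k by simp
    next
      case m: False
      have p0: "0 < p" "p < 1" using k m np unfolding p_def by (auto simp: field_simps)
      have rhs: "p ^ k * (1 - p) ^ m > 0" using p0 by simp
      show ?thesis
      proof (cases "b = 0 \<or> b = 1")
        case True
        then show ?thesis using rhs k m unfolding p_def[symmetric] by (auto simp: zero_power)
      next
        case False
        then have b0: "0 < b" "b < 1" using b by auto
        have bp: "b / p \<noteq> 1" using b(3) p0 unfolding p_def[symmetric] by auto
        have l1: "ln (b/p) < b/p - 1" using ln_strict[OF _ bp] b0 p0 by simp
        have l2: "ln ((1-b)/(1-p)) \<le> (1-b)/(1-p) - 1" using ln_le_minus_one b0 p0 by simp
        have "real k * ln (b/p) + real m * ln ((1-b)/(1-p)) < real k * (b/p - 1) + real m * ((1-b)/(1-p) - 1)"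
          using l1 l2 k m by (intro add_less_le_mono) (auto intro: mult_left_mono)
        also have "\<dots> = 0"
        proof -
          have "real k / p = real (k+m)" unfolding p_def using k np by (simp add: field_simps)
          moreover have "real m / (1-p) = real (k+m)" unfolding p1 using m np by (simp add: field_simps)
          moreover have e: "real k * (b/p - 1) + real m * ((1-b)/(1-p) - 1) = b * (real k / p) - real k + (1-b) * (real m / (1-p)) - real m"
            by (simp add: algebra_simps)
          show ?thesis unfolding e using \<open>real k / p = _\<close> \<open>real m / (1-p) = _\<close>
            by (simp add: algebra_simps)
        qed
        finally have "real k * ln (b/p) + real m * ln ((1-b)/(1-p)) < 0" .
        then have "real k * ln b + real m * ln (1-b) < real k * ln p + real m * ln (1-p)"
          using b0 p0 by (simp add: ln_div algebra_simps)
        then have "ln (b ^ k * (1-b)^m) < ln (p ^ k * (1-p)^m)"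
          using b0 p0 by (simp add: ln_mult ln_realpow)
        then show ?thesis using b0 p0 unfolding p_def[symmetric] by simp
      qed
    qed
  qed
qed

lemma mle:
  assumes n: "n \<ge> 1"
  shows "is_arg_max (likelihood X n \<omega>) (\<lambda>b. b \<in> {0..1}) (Yn X n \<omega>)
      \<and> (\<forall>b\<in>{0..1}. likelihood X n \<omega> b = likelihood X n \<omega> (Yn X n \<omega>) \<longrightarrow> b = Yn X n \<omega>)"
proof -
  define k where "k = card {t. t < n \<and> X t \<omega> = X (Suc t) \<omega>}"
  have kn: "k \<le> n" unfolding k_def using card_mono[of "{..<n}" "{t. t < n \<and> X t \<omega> = X (Suc t) \<omega>}"] by auto
  have nkm: "k + (n - k) = n" using kn by simp
  have L: "\<And>b. likelihood X n \<omega> b = b ^ k * (1 - b) ^ (n - k)" unfolding k_def by (rule lik_form)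
  have Y: "Yn X n \<omega> = real k / real (k + (n - k))" unfolding nkm unfolding k_def by (rule Yn_form)
  have Y01: "Yn X n \<omega> \<in> {0..1}" unfolding Y nkm using kn n by auto
  have strict: "\<And>b. b \<in> {0..1} \<Longrightarrow> b \<noteq> Yn X n \<omega> \<Longrightarrow> likelihood X n \<omega> b < likelihood X n \<omega> (Yn X n \<omega>)"
    unfolding L Y using bin_max[of k "n-k"] n nkm by auto
  show ?thesis
    unfolding is_arg_max_def using Y01 strict by (metis less_irrefl not_less_iff_gr_or_eq)
qed



locale mchain =
  fixes M :: "'a measure" and X :: "nat \<Rightarrow> 'a \<Rightarrow> real" and a :: real
  assumes a0: "0 < a" and a1: "a < 1" and mc: "markov_chain M X"
    and gen: "generated_by M X (mix_copula a) unif_cdf"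
begin

sublocale prob_space M using mc unfolding markov_chain_def by simp

lemma Xm[measurable]: "X t \<in> borel_measurable M"
  using mc unfolding markov_chain_def by simp

lemma cdf1: "prob {\<omega>\<in>space M. X t \<omega> \<le> x} = unif_cdf x"
  using gen unfolding generated_by_def by simp

lemma cdf2: "prob {\<omega>\<in>space M. X t \<omega> \<le> x \<and> X (Suc t) \<omega> \<le> y} = mix_copula a (unif_cdf x) (unif_cdf y)"
  using gen unfolding generated_by_def by simp

lemma F_half: "unif_cdf (1/2) = 1/2" by (simp add: unif_cdf_def)

lemma cdf1h: "prob {\<omega>\<in>space M. X t \<omega> * 2 \<le> 1} = 1/2"
proof -
  have "{\<omega>\<in>space M. X t \<omega> * 2 \<le> 1} = {\<omega>\<in>space M. X t \<omega> \<le> 1/2}" by auto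
  then show ?thesis using cdf1[of t "1/2"] F_half by simp
qed

lemma cdf2h1: "prob {\<omega>\<in>space M. X t \<omega> \<le> x \<and> X (Suc t) \<omega> * 2 \<le> 1} = mix_copula a (unif_cdf x) (1/2)"
proof -
  have "{\<omega>\<in>space M. X t \<omega> \<le> x \<and> X (Suc t) \<omega> * 2 \<le> 1} = {\<omega>\<in>space M. X t \<omega> \<le> x \<and> X (Suc t) \<omega> \<le> 1/2}" by auto
  then show ?thesis using cdf2[of t x "1/2"] F_half by simp
qed

lemma cdf2h2: "prob {\<omega>\<in>space M. X t \<omega> * 2 \<le> 1 \<and> X (Suc t) \<omega> \<le> y} = mix_copula a (1/2) (unif_cdf y)"
proof -
  have "{\<omega>\<in>space M. X t \<omega> * 2 \<le> 1 \<and> X (Suc t) \<omega> \<le> y} = {\<omega>\<in>space M. X t \<omega> \<le> 1/2 \<and> X (Suc t) \<omega> \<le> y}" by auto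
  then show ?thesis using cdf2[of t "1/2" y] F_half by simp
qed

lemma n1: "prob {\<omega>\<in>space M. X t \<omega> \<le> q \<and> q < X (Suc t) \<omega> \<and> X (Suc t) \<omega> \<le> 1/2} = 0"
proof (cases "q < 1/2")
  case True
  have "{\<omega>\<in>space M. X t \<omega> \<le> q \<and> q < X (Suc t) \<omega> \<and> X (Suc t) \<omega> \<le> 1/2} =
    {\<omega>\<in>space M. X t \<omega> \<le> q \<and> X (Suc t) \<omega> \<le> 1/2} - {\<omega>\<in>space M. X t \<omega> \<le> q \<and> X (Suc t) \<omega> \<le> q}"
    by (auto simp: not_le)
  also have "prob \<dots> = prob {\<omega>\<in>space M. X t \<omega> \<le> q \<and> X (Suc t) \<omega> \<le> 1/2} - prob {\<omega>\<in>space M. X t \<omega> \<le> q \<and> X (Suc t) \<omega> \<le> q}"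
    using True by (intro finite_measure_Diff) auto
  also have "\<dots> = 0" unfolding cdf2 F_half using True
    by (auto simp: mix_copula_def unif_cdf_def min_def max_def)
  finally show ?thesis .
next
  case False
  then have "{\<omega>\<in>space M. X t \<omega> \<le> q \<and> q < X (Suc t) \<omega> \<and> X (Suc t) \<omega> \<le> 1/2} = {}" by auto
  then show ?thesis by (metis measure_empty)
qed

lemma n2: "prob {\<omega>\<in>space M. X (Suc t) \<omega> \<le> q \<and> q < X t \<omega> \<and> X t \<omega> \<le> 1/2} = 0"
proof (cases "q < 1/2")
  case True
  have "{\<omega>\<in>space M. X (Suc t) \<omega> \<le> q \<and> q < X t \<omega> \<and> X t \<omega> \<le> 1/2} =
    {\<omega>\<in>space M. X t \<omega> \<le> 1/2 \<and> X (Suc t) \<omega> \<le> q} - {\<omega>\<in>space M. X t \<omega> \<le> q \<and> X (Suc t) \<omega> \<le> q}"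
    by (auto simp: not_le)
  also have "prob \<dots> = prob {\<omega>\<in>space M. X t \<omega> \<le> 1/2 \<and> X (Suc t) \<omega> \<le> q} - prob {\<omega>\<in>space M. X t \<omega> \<le> q \<and> X (Suc t) \<omega> \<le> q}"
    using True by (intro finite_measure_Diff) auto
  also have "\<dots> = 0" unfolding cdf2 F_half using True
    by (auto simp: mix_copula_def unif_cdf_def min_def max_def)
  finally show ?thesis .
next
  case False
  then have "{\<omega>\<in>space M. X (Suc t) \<omega> \<le> q \<and> q < X t \<omega> \<and> X t \<omega> \<le> 1/2} = {}" by auto
  then show ?thesis by (metis measure_empty)
qed

lemma n3: "prob {\<omega>\<in>space M. 1/2 < X (Suc t) \<omega> \<and> X (Suc t) \<omega> \<le> q \<and> q < X t \<omega>} = 0"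
proof (cases "q > 1/2")
  case True
  let ?A = "{\<omega>\<in>space M. X (Suc t) \<omega> \<le> q} - {\<omega>\<in>space M. X (Suc t) \<omega> \<le> 1/2}"
  let ?B = "{\<omega>\<in>space M. X t \<omega> \<le> q \<and> X (Suc t) \<omega> \<le> q} - {\<omega>\<in>space M. X t \<omega> \<le> q \<and> X (Suc t) \<omega> \<le> 1/2}"
  have e0: "{\<omega>\<in>space M. 1/2 < X (Suc t) \<omega> \<and> X (Suc t) \<omega> \<le> q \<and> q < X t \<omega>} = ?A - ?B"
    by (auto simp: not_le)
  have e1: "prob (?A - ?B) = prob ?A - prob ?B"
    by (intro finite_measure_Diff) auto
  have e2: "prob ?A = unif_cdf q - 1/2"
    using True by (subst finite_measure_Diff) (auto simp: cdf1 F_half cdf1h)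
  have e4: "prob ?B = mix_copula a (unif_cdf q) (unif_cdf q) - mix_copula a (unif_cdf q) (1/2)"
    using True by (subst finite_measure_Diff) (auto simp: cdf2 F_half cdf2h1 cdf2h2)
  have e6: "unif_cdf q - 1/2 - (mix_copula a (unif_cdf q) (unif_cdf q) - mix_copula a (unif_cdf q) (1/2)) = 0"
    using True by (auto simp: mix_copula_def unif_cdf_def min_def max_def algebra_simps)
  show ?thesis unfolding e0 e1 e2 e4 using e6 by simp
next
  case False
  then have "{\<omega>\<in>space M. 1/2 < X (Suc t) \<omega> \<and> X (Suc t) \<omega> \<le> q \<and> q < X t \<omega>} = {}" by auto
  then show ?thesis by (metis measure_empty)
qed

lemma n4: "prob {\<omega>\<in>space M. 1/2 < X t \<omega> \<and> X t \<omega> \<le> q \<and> q < X (Suc t) \<omega>} = 0"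
proof (cases "q > 1/2")
  case True
  let ?A = "{\<omega>\<in>space M. X t \<omega> \<le> q} - {\<omega>\<in>space M. X t \<omega> \<le> 1/2}"
  let ?B = "{\<omega>\<in>space M. X t \<omega> \<le> q \<and> X (Suc t) \<omega> \<le> q} - {\<omega>\<in>space M. X t \<omega> \<le> 1/2 \<and> X (Suc t) \<omega> \<le> q}"
  have e0: "{\<omega>\<in>space M. 1/2 < X t \<omega> \<and> X t \<omega> \<le> q \<and> q < X (Suc t) \<omega>} = ?A - ?B"
    by (auto simp: not_le)
  have e1: "prob (?A - ?B) = prob ?A - prob ?B"
    by (intro finite_measure_Diff) auto
  have e2: "prob ?A = unif_cdf q - 1/2"
    using True by (subst finite_measure_Diff) (auto simp: cdf1 F_half cdf1h)
  have e4: "prob ?B = mix_copula a (unif_cdf q) (unif_cdf q) - mix_copula a (1/2) (unif_cdf q)"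
    using True by (subst finite_measure_Diff) (auto simp: cdf2 F_half cdf2h1 cdf2h2)
  have e6: "unif_cdf q - 1/2 - (mix_copula a (unif_cdf q) (unif_cdf q) - mix_copula a (1/2) (unif_cdf q)) = 0"
    using True by (auto simp: mix_copula_def unif_cdf_def min_def max_def algebra_simps)
  show ?thesis unfolding e0 e1 e2 e4 using e6 by simp
next
  case False
  then have "{\<omega>\<in>space M. 1/2 < X t \<omega> \<and> X t \<omega> \<le> q \<and> q < X (Suc t) \<omega>} = {}" by auto
  then show ?thesis by (metis measure_empty)
qed

lemma null_of_prob: "A \<in> sets M \<Longrightarrow> prob A = 0 \<Longrightarrow> A \<in> null_sets M"
  by (simp add: emeasure_eq_measure null_setsI)

lemma AE_eq_split:
  "AE \<omega> in M. (X t \<omega> = X (Suc t) \<omega>) \<longleftrightarrow>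
     ((X t \<omega> \<le> 1/2 \<and> X (Suc t) \<omega> \<le> 1/2) \<or> (1/2 < X t \<omega> \<and> 1/2 < X (Suc t) \<omega>))"
proof -
  define N where "N = (\<Union>r::rat.
     {\<omega>\<in>space M. X t \<omega> \<le> of_rat r \<and> of_rat r < X (Suc t) \<omega> \<and> X (Suc t) \<omega> \<le> 1/2} \<union>
     {\<omega>\<in>space M. X (Suc t) \<omega> \<le> of_rat r \<and> of_rat r < X t \<omega> \<and> X t \<omega> \<le> 1/2} \<union>
     {\<omega>\<in>space M. 1/2 < X (Suc t) \<omega> \<and> X (Suc t) \<omega> \<le> of_rat r \<and> of_rat r < X t \<omega>} \<union>
     {\<omega>\<in>space M. 1/2 < X t \<omega> \<and> X t \<omega> \<le> of_rat r \<and> of_rat r < X (Suc t) \<omega>})"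
  have "N \<in> null_sets M"
    unfolding N_def
    by (intro null_sets_UN null_sets.Un null_of_prob n1 n2 n3 n4) auto
  moreover have "{\<omega>\<in>space M. \<not> ((X t \<omega> = X (Suc t) \<omega>) \<longleftrightarrow>
     ((X t \<omega> \<le> 1/2 \<and> X (Suc t) \<omega> \<le> 1/2) \<or> (1/2 < X t \<omega> \<and> 1/2 < X (Suc t) \<omega>)))} \<subseteq> N"
  proof
    fix \<omega> assume w: "\<omega> \<in> {\<omega>\<in>space M. \<not> ((X t \<omega> = X (Suc t) \<omega>) \<longleftrightarrow>
     ((X t \<omega> \<le> 1/2 \<and> X (Suc t) \<omega> \<le> 1/2) \<or> (1/2 < X t \<omega> \<and> 1/2 < X (Suc t) \<omega>)))}"
    then have sp: "\<omega> \<in> space M" and ne: "X t \<omega> \<noteq> X (Suc t) \<omega>"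
      and both: "(X t \<omega> \<le> 1/2 \<and> X (Suc t) \<omega> \<le> 1/2) \<or> (1/2 < X t \<omega> \<and> 1/2 < X (Suc t) \<omega>)"
      by auto
    show "\<omega> \<in> N"
    proof (cases "X t \<omega> < X (Suc t) \<omega>")
      case True
      then obtain q where q: "q \<in> \<rat>" "X t \<omega> < q" "q < X (Suc t) \<omega>" using Rats_dense_in_real by blast
      then obtain r where r: "q = of_rat r" by (auto elim: Rats_cases)
      show ?thesis unfolding N_def using both q sp r
        by (intro UN_I[of r]) auto
    next
      case False
      then have lt: "X (Suc t) \<omega> < X t \<omega>" using ne by auto
      then obtain q where q: "q \<in> \<rat>" "X (Suc t) \<omega> < q" "q < X t \<omega>" using Rats_dense_in_real by blast
      then obtain r where r: "q = of_rat r" by (auto elim: Rats_cases)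
      show ?thesis unfolding N_def using both q sp r
        by (intro UN_I[of r]) auto
    qed
  qed
  ultimately show ?thesis by (rule AE_I')
qed

end


lemma em_distr_density:
  fixes M :: "'a measure" and g :: "'a \<Rightarrow> real" and f :: "'a \<Rightarrow> real"
  assumes [measurable]: "g \<in> borel_measurable M" "f \<in> borel_measurable M"
    and ig: "integrable M g" and nn: "\<And>\<omega>. 0 \<le> g \<omega>" and D[measurable]: "D \<in> sets borel"
  shows "emeasure (distr (density M (\<lambda>\<omega>. ennreal (g \<omega>))) borel f) D
     = ennreal (\<integral>\<omega>. indicator (f -` D \<inter> space M) \<omega> * g \<omega> \<partial>M)"
proof -
  have fm: "f \<in> measurable (density M (\<lambda>\<omega>. ennreal (g \<omega>))) borel"
  proof -
    have "measurable (density M (\<lambda>\<omega>. ennreal (g \<omega>))) (borel::real measure) = measurable M borel"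
      by (intro measurable_cong_sets) simp_all
    then show ?thesis using assms(2) by simp
  qed
  have S[measurable]: "f -` D \<inter> space M \<in> sets M" using assms(2) D by (rule measurable_sets)
  have "emeasure (distr (density M (\<lambda>\<omega>. ennreal (g \<omega>))) borel f) D
      = emeasure (density M (\<lambda>\<omega>. ennreal (g \<omega>))) (f -` D \<inter> space M)"
    by (simp only: emeasure_distr[OF fm D] space_density)
  also have "\<dots> = (\<integral>\<^sup>+ \<omega>. ennreal (g \<omega>) * indicator (f -` D \<inter> space M) \<omega> \<partial>M)"
    using S by (intro emeasure_density) simp_all
  also have "\<dots> = (\<integral>\<^sup>+ \<omega>. ennreal (indicator (f -` D \<inter> space M) \<omega> * g \<omega>) \<partial>M)"
    by (intro nn_integral_cong) (simp split: split_indicator)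
  also have "\<dots> = ennreal (\<integral>\<omega>. indicator (f -` D \<inter> space M) \<omega> * g \<omega> \<partial>M)"
    using integrable_mult_indicator[OF S ig] nn
    by (intro nn_integral_eq_integral) (simp_all split: split_indicator)
  finally show ?thesis .
qed
lemma unique_by_cdf:
  fixes M :: "'a measure" and g1 g2 :: "'a \<Rightarrow> real" and f :: "'a \<Rightarrow> real"
  assumes m: "g1 \<in> borel_measurable M" "g2 \<in> borel_measurable M" "f \<in> borel_measurable M"
    and ig: "integrable M g1" "integrable M g2" and nn: "\<And>\<omega>. 0 \<le> g1 \<omega>" "\<And>\<omega>. 0 \<le> g2 \<omega>"
    and eq: "\<And>x. (\<integral>\<omega>. indicator (f -` {..x} \<inter> space M) \<omega> * g1 \<omega> \<partial>M) = (\<integral>\<omega>. indicator (f -` {..x} \<inter> space M) \<omega> * g2 \<omega> \<partial>M)"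
    and D: "D \<in> sets borel"
  shows "(\<integral>\<omega>. indicator (f -` D \<inter> space M) \<omega> * g1 \<omega> \<partial>M) = (\<integral>\<omega>. indicator (f -` D \<inter> space M) \<omega> * g2 \<omega> \<partial>M)"
proof -
  define \<mu>1 where "\<mu>1 = distr (density M (\<lambda>\<omega>. ennreal (g1 \<omega>))) borel f"
  define \<mu>2 where "\<mu>2 = distr (density M (\<lambda>\<omega>. ennreal (g2 \<omega>))) borel f"
  have e1: "\<And>D. D \<in> sets borel \<Longrightarrow> emeasure \<mu>1 D = ennreal (\<integral>\<omega>. indicator (f -` D \<inter> space M) \<omega> * g1 \<omega> \<partial>M)"
    unfolding \<mu>1_def by (rule em_distr_density[OF m(1) m(3) ig(1) nn(1)])
  have e2: "\<And>D. D \<in> sets borel \<Longrightarrow> emeasure \<mu>2 D = ennreal (\<integral>\<omega>. indicator (f -` D \<inter> space M) \<omega> * g2 \<omega> \<partial>M)"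
    unfolding \<mu>2_def by (rule em_distr_density[OF m(2) m(3) ig(2) nn(2)])
  have s1: "sets \<mu>1 = sets borel" "space \<mu>1 = UNIV" unfolding \<mu>1_def by simp_all
  have s2: "sets \<mu>2 = sets borel" "space \<mu>2 = UNIV" unfolding \<mu>2_def by simp_all
  have fb1: "finite_borel_measure \<mu>1"
  proof -
    have "finite_measure \<mu>1" by (rule finite_measureI) (simp add: s1 e1)
    then show ?thesis using s1 by (simp add: finite_borel_measure_def finite_borel_measure_axioms_def)
  qed
  have fb2: "finite_borel_measure \<mu>2"
  proof -
    have "finite_measure \<mu>2" by (rule finite_measureI) (simp add: s2 e2)
    then show ?thesis using s2 by (simp add: finite_borel_measure_def finite_borel_measure_axioms_def)
  qed
  have nn1: "\<And>D. 0 \<le> (\<integral>\<omega>. indicator (f -` D \<inter> space M) \<omega> * g1 \<omega> \<partial>M)"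
    using nn by (simp add: integral_nonneg split: split_indicator)
  have nn2: "\<And>D. 0 \<le> (\<integral>\<omega>. indicator (f -` D \<inter> space M) \<omega> * g2 \<omega> \<partial>M)"
    using nn by (simp add: integral_nonneg split: split_indicator)
  have "cdf \<mu>1 = cdf \<mu>2"
  proof
    fix x
    show "cdf \<mu>1 x = cdf \<mu>2 x"
      unfolding cdf_def measure_def using e1[of "{..x}"] e2[of "{..x}"] eq[of x] nn1 nn2 by simp
  qed
  then have "\<mu>1 = \<mu>2" using fb1 fb2 by (intro cdf_unique') auto
  then have "ennreal (\<integral>\<omega>. indicator (f -` D \<inter> space M) \<omega> * g1 \<omega> \<partial>M) = ennreal (\<integral>\<omega>. indicator (f -` D \<inter> space M) \<omega> * g2 \<omega> \<partial>M)"
    using e1[OF D] e2[OF D] by simp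
  then show ?thesis using nn1 nn2 by simp
qed



definition half :: real where "half = 1/2"

context mchain
begin

definition hh :: "real \<Rightarrow> real" where "hh x = (if x \<le> half then a else 1 - a)"

lemma hh_meas[measurable]: "hh \<in> borel_measurable borel"
  unfolding hh_def by measurable

lemma subalg_G: "subalgebra M (vimage_algebra (space M) (X t) borel)"
  unfolding subalgebra_def by (simp add: sets_image_in_sets)

lemma sf_G: "sigma_finite_subalgebra M (vimage_algebra (space M) (X t) borel)"
  apply (rule finite_measure_subalgebra_is_sigma_finite)
  unfolding finite_measure_subalgebra_def finite_measure_subalgebra_axioms_def
  using subalg_G finite_measure_axioms by simp

lemma past_map_meas: "(\<lambda>\<omega>. \<lambda>i\<in>{..t}. X i \<omega>) \<in> measurable M (PiM {..t} (\<lambda>_. borel))"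
  by measurable

lemma subalg_P: "subalgebra M (past_algebra M X t)"
  unfolding subalgebra_def past_algebra_def using past_map_meas by (simp add: sets_image_in_sets)

lemma sf_P: "sigma_finite_subalgebra M (past_algebra M X t)"
  apply (rule finite_measure_subalgebra_is_sigma_finite)
  unfolding finite_measure_subalgebra_def finite_measure_subalgebra_axioms_def
  using subalg_P finite_measure_axioms by simp

lemma X_meas_G: "X t \<in> borel_measurable (vimage_algebra (space M) (X t) borel)"
  by (rule measurable_vimage_algebra1) simp

lemma X_meas_P: assumes "j \<le> t" shows "X j \<in> borel_measurable (past_algebra M X t)"
proof -
  have m: "(\<lambda>\<omega>. \<lambda>i\<in>{..t}. X i \<omega>) \<in> measurable (past_algebra M X t) (PiM {..t} (\<lambda>_. borel))"
    unfolding past_algebra_def by (rule measurable_vimage_algebra1) (auto simp: space_PiM)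
  have "(\<lambda>\<omega>. (\<lambda>i\<in>{..t}. X i \<omega>) j) \<in> borel_measurable (past_algebra M X t)"
    using measurable_compose[OF m measurable_component_singleton[of j "{..t}" "\<lambda>_. borel"]] assms
    by simp
  then show ?thesis using assms by simp
qed


lemma F_halfc: "unif_cdf half = 1/2" by (simp add: unif_cdf_def half_def)

lemma ind_int: "A \<in> sets M \<Longrightarrow> integrable M (indicator A :: 'a \<Rightarrow> real)"
  by (rule integrable_real_indicator) (simp_all add: emeasure_eq_measure)

lemma int_L: "(\<integral>\<omega>. (indicator (X t -` {..x} \<inter> space M) \<omega> :: real) * indicator {\<omega>\<in>space M. X (Suc t) \<omega> \<in> {..half}} \<omega> \<partial>M)
   = mix_copula a (unif_cdf x) (1/2)"
proof -
  have "(\<integral>\<omega>. (indicator (X t -` {..x} \<inter> space M) \<omega> :: real) * indicator {\<omega>\<in>space M. X (Suc t) \<omega> \<in> {..half}} \<omega> \<partial>M)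
    = (\<integral>\<omega>. indicator {\<omega>\<in>space M. X t \<omega> \<le> x \<and> X (Suc t) \<omega> \<le> half} \<omega> \<partial>M)"
    by (intro Bochner_Integration.integral_cong) (simp_all split: split_indicator)
  also have "\<dots> = prob {\<omega>\<in>space M. X t \<omega> \<le> x \<and> X (Suc t) \<omega> \<le> half}"
    by (simp add: Int_absorb2 Collect_subset)
  also have "\<dots> = mix_copula a (unif_cdf x) (1/2)" by (simp only: cdf2 F_halfc)
  finally show ?thesis .
qed

lemma int_h: "(\<integral>\<omega>. indicator (X t -` {..x} \<inter> space M) \<omega> * hh (X t \<omega>) \<partial>M)
   = (1-a) * unif_cdf x + (2*a-1) * unif_cdf (min x half)"
proof -
  let ?S1 = "{\<omega>\<in>space M. X t \<omega> \<le> x}"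
  let ?S2 = "{\<omega>\<in>space M. X t \<omega> \<le> min x half}"
  have S[measurable]: "?S1 \<in> sets M" "?S2 \<in> sets M" by measurable
  have "(\<integral>\<omega>. indicator (X t -` {..x} \<inter> space M) \<omega> * hh (X t \<omega>) \<partial>M)
    = (\<integral>\<omega>. (1-a) * indicator ?S1 \<omega> + (2*a-1) * indicator ?S2 \<omega> \<partial>M)"
    by (intro Bochner_Integration.integral_cong) (auto simp: hh_def split: split_indicator)
  also have "\<dots> = (1-a) * prob ?S1 + (2*a-1) * prob ?S2"
    using ind_int[OF S(1)] ind_int[OF S(2)]
    by (simp add: Int_absorb2 Collect_subset)
  also have "\<dots> = (1-a) * unif_cdf x + (2*a-1) * unif_cdf (min x half)"
    by (simp only: cdf1)
  finally show ?thesis .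
qed

lemma arith_L: "mix_copula a (unif_cdf x) (1/2) = (1-a) * unif_cdf x + (2*a-1) * unif_cdf (min x half)"
  unfolding mix_copula_def unif_cdf_def half_def min_def max_def
  by (auto simp: algebra_simps)

lemma ce_G: "AE \<omega> in M. real_cond_exp M (vimage_algebra (space M) (X t) borel)
      (indicator {\<omega>\<in>space M. X (Suc t) \<omega> \<in> {..half}}) \<omega> = hh (X t \<omega>)"
proof -
  interpret G: sigma_finite_subalgebra M "vimage_algebra (space M) (X t) borel" by (rule sf_G)
  let ?L = "{\<omega>\<in>space M. X (Suc t) \<omega> \<in> {..half}}"
  have Lm: "?L \<in> sets M" by measurable
  have hm: "(\<lambda>\<omega>. hh (X t \<omega>)) \<in> borel_measurable M" by measurable
  have hG: "(\<lambda>\<omega>. hh (X t \<omega>)) \<in> borel_measurable (vimage_algebra (space M) (X t) borel)"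
    using measurable_compose[OF X_meas_G hh_meas] by (simp add: comp_def)
  have ih: "integrable M (\<lambda>\<omega>. hh (X t \<omega>))"
    by (rule integrable_const_bound[where B=1]) (auto simp: hh_def a0 a1 less_imp_le hm)
  have hnn: "\<And>\<omega>. 0 \<le> hh (X t \<omega>)" using a0 a1 by (simp add: hh_def)
  show ?thesis
  proof (rule G.real_cond_exp_charact)
    fix A assume "A \<in> sets (vimage_algebra (space M) (X t) borel)"
    then obtain D where D: "D \<in> sets borel" and A: "A = X t -` D \<inter> space M"
      by (auto simp: sets_vimage_algebra2)
    have "(\<integral>\<omega>. indicator (X t -` D \<inter> space M) \<omega> * indicator ?L \<omega> \<partial>M)
        = (\<integral>\<omega>. indicator (X t -` D \<inter> space M) \<omega> * hh (X t \<omega>) \<partial>M)"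
    proof (rule unique_by_cdf[OF _ hm Xm ind_int[OF Lm] ih _ hnn _ D])
      show "indicator ?L \<in> borel_measurable M" using Lm by simp
      show "\<And>\<omega>. 0 \<le> (indicator ?L \<omega> :: real)" by simp
      fix x
      show "(\<integral>\<omega>. indicator (X t -` {..x} \<inter> space M) \<omega> * indicator ?L \<omega> \<partial>M) =
            (\<integral>\<omega>. indicator (X t -` {..x} \<inter> space M) \<omega> * hh (X t \<omega>) \<partial>M)"
        unfolding int_L int_h arith_L ..
    qed
    then show "(\<integral>\<omega>\<in>A. indicator ?L \<omega> \<partial>M) = (\<integral>\<omega>\<in>A. hh (X t \<omega>) \<partial>M)"
      unfolding A set_lebesgue_integral_def by simp
  next
    show "integrable M (indicator ?L :: 'a \<Rightarrow> real)" by (rule ind_int[OF Lm])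
  qed (rule ih, rule hG)
qed


lemma P_sub: "A \<in> sets (past_algebra M X t) \<Longrightarrow> A \<in> sets M"
  using subalg_P unfolding subalgebra_def by auto

lemma P_space: "A \<in> sets (past_algebra M X t) \<Longrightarrow> A \<subseteq> space M"
  using P_sub sets.sets_into_space by blast

lemma key1:
  assumes A: "A \<in> sets (past_algebra M X t)"
  shows "prob (A \<inter> {\<omega>\<in>space M. X (Suc t) \<omega> \<in> {..half}}) = (\<integral>\<omega>. indicator A \<omega> * hh (X t \<omega>) \<partial>M)"
proof -
  interpret P: sigma_finite_subalgebra M "past_algebra M X t" by (rule sf_P)
  let ?L = "{\<omega>\<in>space M. X (Suc t) \<omega> \<in> {..half}}"
  have Lm: "?L \<in> sets M" by measurable
  have AM: "A \<in> sets M" by (rule P_sub[OF A])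
  have mk: "AE \<omega> in M. real_cond_exp M (past_algebra M X t) (indicator ?L) \<omega>
        = real_cond_exp M (vimage_algebra (space M) (X t) borel) (indicator ?L) \<omega>"
  proof -
    have "{..half} \<in> sets (borel::real measure)" by simp
    then show ?thesis using mc unfolding markov_chain_def by blast
  qed
  have ae: "AE \<omega> in M. real_cond_exp M (past_algebra M X t) (indicator ?L) \<omega> = hh (X t \<omega>)"
    using mk ce_G[of t] by eventually_elim simp
  have "prob (A \<inter> ?L) = (\<integral>\<omega>. indicator A \<omega> * (indicator ?L \<omega> :: real) \<partial>M)"
  proof -
    have "(\<integral>\<omega>. indicator A \<omega> * (indicator ?L \<omega> :: real) \<partial>M) = (\<integral>\<omega>. indicator (A \<inter> ?L) \<omega> \<partial>M)"
      by (intro Bochner_Integration.integral_cong) (simp_all split: split_indicator)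
    then show ?thesis using AM Lm by (simp add: Int_absorb2 sets.sets_into_space)
  qed
  also have "\<dots> = (\<integral>\<omega>\<in>A. (indicator ?L \<omega> :: real) \<partial>M)"
    by (simp add: set_lebesgue_integral_def)
  also have "\<dots> = (\<integral>\<omega>\<in>A. real_cond_exp M (past_algebra M X t) (indicator ?L) \<omega> \<partial>M)"
    by (rule P.real_cond_exp_intA[OF ind_int[OF Lm] A])
  also have "\<dots> = (\<integral>\<omega>. indicator A \<omega> * hh (X t \<omega>) \<partial>M)"
    unfolding set_lebesgue_integral_def
    using ae AM by (intro integral_cong_AE) (auto simp: borel_measurable_cond_exp2)
  finally show ?thesis .
qed

lemma keyA:
  assumes A: "A \<in> sets (past_algebra M X t)"
  shows "prob (A \<inter> {\<omega>\<in>space M. X t \<omega> = X (Suc t) \<omega>}) = a * prob A"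
proof -
  let ?L = "{\<omega>\<in>space M. X (Suc t) \<omega> \<in> {..half}}"
  let ?H = "{\<omega>\<in>space M. X t \<omega> \<in> {..half}}"
  have Lm: "?L \<in> sets M" by measurable
  have AM: "A \<in> sets M" by (rule P_sub[OF A])
  have HP: "?H \<in> sets (past_algebra M X t)"
  proof -
    have "X t -` {..half} \<inter> space (past_algebra M X t) \<in> sets (past_algebra M X t)"
      using X_meas_P[of t t] by (intro measurable_sets) auto
    then show ?thesis by (simp add: past_algebra_def Collect_conj_eq Int_commute vimage_def)
  qed
  define A1 where "A1 = A \<inter> ?H"
  define A2 where "A2 = A - ?H"
  have A1P: "A1 \<in> sets (past_algebra M X t)" unfolding A1_def using A HP by auto
  have A2P: "A2 \<in> sets (past_algebra M X t)" unfolding A2_def using A HP by auto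
  have A1M: "A1 \<in> sets M" by (rule P_sub[OF A1P])
  have A2M: "A2 \<in> sets M" by (rule P_sub[OF A2P])
  have i1: "(\<integral>\<omega>. indicator A1 \<omega> * hh (X t \<omega>) \<partial>M) = a * prob A1"
  proof -
    have "(\<integral>\<omega>. indicator A1 \<omega> * hh (X t \<omega>) \<partial>M) = (\<integral>\<omega>. a * indicator A1 \<omega> \<partial>M)"
      by (intro Bochner_Integration.integral_cong) (auto simp: A1_def hh_def split: split_indicator)
    then show ?thesis using A1M by (simp add: Int_absorb2 sets.sets_into_space)
  qed
  have i2: "(\<integral>\<omega>. indicator A2 \<omega> * hh (X t \<omega>) \<partial>M) = (1-a) * prob A2"
  proof -
    have "(\<integral>\<omega>. indicator A2 \<omega> * hh (X t \<omega>) \<partial>M) = (\<integral>\<omega>. (1-a) * indicator A2 \<omega> \<partial>M)"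
      using P_space[OF A]
      by (intro Bochner_Integration.integral_cong) (auto simp: A2_def hh_def split: split_indicator)
    then show ?thesis using A2M by (simp add: Int_absorb2 sets.sets_into_space)
  qed
  have p1: "prob (A1 \<inter> ?L) = a * prob A1" using key1[OF A1P] i1 by simp
  have p2: "prob (A2 - ?L) = a * prob A2"
  proof -
    have "prob (A2 - ?L) = prob A2 - prob (A2 \<inter> ?L)"
      using finite_measure_Diff'[OF A2M Lm] by simp
    then show ?thesis using key1[OF A2P] i2 by (simp add: algebra_simps)
  qed
  have AE2: "AE \<omega> in M. \<omega> \<in> A \<inter> {\<omega>\<in>space M. X t \<omega> = X (Suc t) \<omega>} \<longleftrightarrow> \<omega> \<in> (A1 \<inter> ?L) \<union> (A2 - ?L)"
    using AE_eq_split[of t]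
  proof eventually_elim
    case (elim \<omega>)
    then show ?case using P_space[OF A] by (auto simp: A1_def A2_def half_def)
  qed
  have "prob (A \<inter> {\<omega>\<in>space M. X t \<omega> = X (Suc t) \<omega>}) = prob ((A1 \<inter> ?L) \<union> (A2 - ?L))"
    using AE2 AM A1M A2M Lm by (intro measure_eq_AE) auto
  also have "\<dots> = prob (A1 \<inter> ?L) + prob (A2 - ?L)"
    using A1M A2M Lm by (intro finite_measure_Union) (auto simp: A1_def A2_def)
  also have "\<dots> = a * (prob A1 + prob A2)" using p1 p2 by (simp add: algebra_simps)
  also have "prob A1 + prob A2 = prob A"
  proof -
    have "prob A = prob (A1 \<union> A2)" by (simp add: A1_def A2_def Un_Diff_Int[of A] Int_commute Un_commute)
    also have "\<dots> = prob A1 + prob A2" using A1M A2M by (intro finite_measure_Union) (auto simp: A1_def A2_def)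
    finally show ?thesis by simp
  qed
  finally show ?thesis .
qed

end


context mchain
begin

abbreviation EE :: "nat \<Rightarrow> 'a set" where "EE t \<equiv> {\<omega>\<in>space M. X t \<omega> = X (Suc t) \<omega>}"

lemma EE_sets: "EE t \<in> sets M" by measurable

lemma EE_P: assumes "j < t" shows "EE j \<in> sets (past_algebra M X t)"
proof -
  have [measurable]: "X j \<in> borel_measurable (past_algebra M X t)" "X (Suc j) \<in> borel_measurable (past_algebra M X t)"
    using X_meas_P assms by auto
  have "{\<omega>\<in>space (past_algebra M X t). X j \<omega> = X (Suc j) \<omega>} \<in> sets (past_algebra M X t)" by measurable
  then show ?thesis by (simp add: past_algebra_def)
qed

lemma space_P: "space M \<in> sets (past_algebra M X t)"
  using sets.top[of "past_algebra M X t"] by (simp add: past_algebra_def)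

lemma probE: "prob (EE t) = a"
  using keyA[OF space_P, of t] by (simp add: Int_absorb1 prob_space)

lemma pre_cases:
  "(\<lambda>\<omega>. X t \<omega> = X (Suc t) \<omega>) -` S \<inter> space M \<in> {{}, EE t, space M - EE t, space M}"
proof (cases "True \<in> S"; cases "False \<in> S")
  assume "True \<in> S" "False \<in> S"
  then have "(\<lambda>\<omega>. X t \<omega> = X (Suc t) \<omega>) -` S \<inter> space M = space M" by (auto simp: vimage_def) (metis (full_types))
  then show ?thesis by simp
next
  assume "True \<in> S" "False \<notin> S"
  then have "(\<lambda>\<omega>. X t \<omega> = X (Suc t) \<omega>) -` S \<inter> space M = EE t" by (auto simp: vimage_def) (metis (full_types))+
  then show ?thesis by simp
next
  assume "True \<notin> S" "False \<in> S"
  then have "(\<lambda>\<omega>. X t \<omega> = X (Suc t) \<omega>) -` S \<inter> space M = space M - EE t" by (auto simp: vimage_def) (metis (full_types))+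
  then show ?thesis by simp
next
  assume "True \<notin> S" "False \<notin> S"
  then have "(\<lambda>\<omega>. X t \<omega> = X (Suc t) \<omega>) -` S \<inter> space M = {}" by (auto simp: vimage_def) (metis (full_types))+
  then show ?thesis by simp
qed

lemma pre_P: assumes "j < t"
  shows "(\<lambda>\<omega>. X j \<omega> = X (Suc j) \<omega>) -` S \<inter> space M \<in> sets (past_algebra M X t)"
  using pre_cases[of j S] EE_P[OF assms] space_P[of t] by auto

lemma L1:
  assumes A: "A \<in> sets (past_algebra M X t)"
  shows "prob (A \<inter> ((\<lambda>\<omega>. X t \<omega> = X (Suc t) \<omega>) -` S \<inter> space M))
    = prob A * prob ((\<lambda>\<omega>. X t \<omega> = X (Suc t) \<omega>) -` S \<inter> space M)"
proof -
  have AM: "A \<in> sets M" by (rule P_sub[OF A])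
  have As: "A \<subseteq> space M" by (rule P_space[OF A])
  have kA: "prob (A \<inter> EE t) = a * prob A" by (rule keyA[OF A])
  show ?thesis
  using pre_cases[of t S]
  proof (elim insertE)
    assume e: "(\<lambda>\<omega>. X t \<omega> = X (Suc t) \<omega>) -` S \<inter> space M = {}"
    show ?thesis unfolding e by simp
  next
    assume e: "(\<lambda>\<omega>. X t \<omega> = X (Suc t) \<omega>) -` S \<inter> space M = EE t"
    show ?thesis unfolding e kA probE by simp
  next
    assume e: "(\<lambda>\<omega>. X t \<omega> = X (Suc t) \<omega>) -` S \<inter> space M = space M - EE t"
    have "A \<inter> (space M - EE t) = A - A \<inter> EE t" using As by auto
    then have h1: "prob (A \<inter> (space M - EE t)) = prob A - a * prob A"
      using AM EE_sets kA by (simp add: finite_measure_Diff)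
    have h2: "prob (space M - EE t) = 1 - a"
      using EE_sets probE by (simp add: prob_compl)
    show ?thesis unfolding e h1 h2 by (simp add: algebra_simps)
  next
    assume e: "(\<lambda>\<omega>. X t \<omega> = X (Suc t) \<omega>) -` S \<inter> space M = space M"
    show ?thesis unfolding e using As by (simp add: Int_absorb2 prob_space)
  next
    assume "(\<lambda>\<omega>. X t \<omega> = X (Suc t) \<omega>) -` S \<inter> space M \<in> {}"
    then show ?thesis by simp
  qed
qed

lemma fin_INT_sets:
  assumes "finite J" "\<And>j. j \<in> J \<Longrightarrow> A j \<in> sets N"
  shows "space N \<inter> \<Inter> (A ` J) \<in> sets N"
  using assms
proof (induction J rule: finite_induct)
  case empty
  then show ?case by simp
next
  case (insert x F)
  have "space N \<inter> \<Inter> (A ` insert x F) = A x \<inter> (space N \<inter> \<Inter> (A ` F))" by auto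
  then show ?case using insert by auto
qed

lemma prodL:
  "finite J \<Longrightarrow> J \<subseteq> {..<n} \<Longrightarrow>
   (\<forall>j\<in>J. \<exists>S. A j = (\<lambda>\<omega>. X j \<omega> = X (Suc j) \<omega>) -` S \<inter> space M) \<Longrightarrow>
   prob (space M \<inter> \<Inter> (A ` J)) = (\<Prod>j\<in>J. prob (A j))"
proof (induction n arbitrary: J)
  case 0
  then show ?case by (simp add: prob_space)
next
  case (Suc n)
  show ?case
  proof (cases "n \<in> J")
    case False
    then have "J \<subseteq> {..<n}" using Suc.prems by (auto simp: less_Suc_eq)
    then show ?thesis using Suc by blast
  next
    case True
    define J' where "J' = J - {n}"
    have J'n: "J' \<subseteq> {..<n}" "finite J'" using Suc.prems by (auto simp: J'_def less_Suc_eq)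
    have J: "J = insert n J'" "n \<notin> J'" using True by (auto simp: J'_def)
    have IH: "prob (space M \<inter> \<Inter> (A ` J')) = (\<Prod>j\<in>J'. prob (A j))"
      using Suc.IH[OF J'n(2) J'n(1)] Suc.prems(3) J by auto
    have BP: "space M \<inter> \<Inter> (A ` J') \<in> sets (past_algebra M X n)"
    proof -
      have "space (past_algebra M X n) \<inter> \<Inter> (A ` J') \<in> sets (past_algebra M X n)"
      proof (rule fin_INT_sets[OF J'n(2)])
        fix j assume j: "j \<in> J'"
        then obtain S where "A j = (\<lambda>\<omega>. X j \<omega> = X (Suc j) \<omega>) -` S \<inter> space M"
          using Suc.prems(3) J by auto
        then show "A j \<in> sets (past_algebra M X n)" using pre_P[of j n S] j J'n by auto
      qed
      then show ?thesis by (simp add: past_algebra_def)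
    qed
    obtain S where Sn: "A n = (\<lambda>\<omega>. X n \<omega> = X (Suc n) \<omega>) -` S \<inter> space M"
      using Suc.prems(3) True by auto
    have "space M \<inter> \<Inter> (A ` J) = (space M \<inter> \<Inter> (A ` J')) \<inter> A n" using J by auto
    then have "prob (space M \<inter> \<Inter> (A ` J)) = prob (space M \<inter> \<Inter> (A ` J')) * prob (A n)"
      using L1[OF BP, of S] Sn by simp
    also have "\<dots> = (\<Prod>j\<in>J. prob (A j))" using IH J J'n by (simp add: mult.commute)
    finally show ?thesis .
  qed
qed

lemma D_rv: "(\<lambda>\<omega>. X t \<omega> = X (Suc t) \<omega>) \<in> measurable M (count_space UNIV)"
  unfolding pred_def[symmetric] by measurable

lemma indep_D: "indep_vars (\<lambda>_. count_space UNIV) (\<lambda>t \<omega>. X t \<omega> = X (Suc t) \<omega>) UNIV"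
  unfolding indep_vars_def2
proof (intro conjI ballI)
  fix i show "random_variable (count_space UNIV) (\<lambda>\<omega>. X i \<omega> = X (Suc i) \<omega>)" by (rule D_rv)
next
  show "indep_sets (\<lambda>i. {(\<lambda>\<omega>. X i \<omega> = X (Suc i) \<omega>) -` A \<inter> space M |A. A \<in> sets (count_space UNIV)}) UNIV"
    unfolding indep_sets_def
  proof (intro conjI ballI allI impI)
    fix i
    show "{(\<lambda>\<omega>. X i \<omega> = X (Suc i) \<omega>) -` A \<inter> space M |A. A \<in> sets (count_space UNIV)} \<subseteq> events"
      using measurable_sets[OF D_rv] by auto
  next
    fix J :: "nat set" and A
    assume J: "J \<subseteq> UNIV" "J \<noteq> {}" "finite J"
      and A: "A \<in> Pi J (\<lambda>i. {(\<lambda>\<omega>. X i \<omega> = X (Suc i) \<omega>) -` A \<inter> space M |A. A \<in> sets (count_space UNIV)})"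
    have ex: "\<forall>j\<in>J. \<exists>S. A j = (\<lambda>\<omega>. X j \<omega> = X (Suc j) \<omega>) -` S \<inter> space M" using A by auto
    have sub: "J \<subseteq> {..<Suc (Max J)}" using J by (auto simp: le_imp_less_Suc)
    have "\<Inter> (A ` J) \<subseteq> space M" using ex J(2) by blast
    then have "\<Inter> (A ` J) = space M \<inter> \<Inter> (A ` J)" by blast
    then show "prob (\<Inter> (A ` J)) = (\<Prod>j\<in>J. prob (A j))"
      using prodL[OF J(3) sub ex] by simp
  qed
qed

lemma distr_D: "distr M (count_space UNIV) (\<lambda>\<omega>. X t \<omega> = X (Suc t) \<omega>) = measure_pmf (bernoulli_pmf a)"
proof (rule measure_eqI_countable[where A=UNIV])
  fix b :: bool
  have "emeasure (distr M (count_space UNIV) (\<lambda>\<omega>. X t \<omega> = X (Suc t) \<omega>)) {b}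
    = emeasure M ((\<lambda>\<omega>. X t \<omega> = X (Suc t) \<omega>) -` {b} \<inter> space M)"
    by (rule emeasure_distr[OF D_rv]) simp
  also have "\<dots> = ennreal (if b then a else 1 - a)"
  proof (cases b)
    case True
    then have "(\<lambda>\<omega>. X t \<omega> = X (Suc t) \<omega>) -` {b} \<inter> space M = EE t" by auto
    then show ?thesis using True probE EE_sets by (simp add: emeasure_eq_measure)
  next
    case False
    then have "(\<lambda>\<omega>. X t \<omega> = X (Suc t) \<omega>) -` {b} \<inter> space M = space M - EE t" by auto
    then show ?thesis using False probE EE_sets by (simp add: emeasure_eq_measure prob_compl)
  qed
  also have "\<dots> = emeasure (measure_pmf (bernoulli_pmf a)) {b}"
    using a0 a1 by (cases b) (simp_all add: emeasure_pmf_single)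
  finally show "emeasure (distr M (count_space UNIV) (\<lambda>\<omega>. X t \<omega> = X (Suc t) \<omega>)) {b} = emeasure (measure_pmf (bernoulli_pmf a)) {b}" .
qed auto

end


context mchain
begin

lemma eqind_meas[measurable]: "eqind X t \<in> borel_measurable M"
  unfolding eqind_def by measurable

lemma eqind_ind: "\<omega> \<in> space M \<Longrightarrow> eqind X t \<omega> = indicator (EE t) \<omega>"
  by (simp add: eqind_def split: split_indicator)

lemma eqind_bound: "\<bar>eqind X t \<omega>\<bar> \<le> 1" by (simp add: eqind_def)

lemma eqind_int: "integrable M (eqind X t)"
  by (rule integrable_const_bound[where B=1]) (simp_all add: eqind_bound)

lemma int_eqind: "integral\<^sup>L M (eqind X t) = a"
proof -
  have "integral\<^sup>L M (eqind X t) = integral\<^sup>L M (indicator (EE t))"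
    by (intro Bochner_Integration.integral_cong) (simp_all add: eqind_ind)
  also have "\<dots> = a" using probE[of t] by (simp add: Int_absorb2)
  finally show ?thesis .
qed

lemma int_Yn: "n \<ge> 1 \<Longrightarrow> integral\<^sup>L M (Yn X n) = a"
proof -
  assume n: "n \<ge> 1"
  have "integral\<^sup>L M (Yn X n) = (\<integral>\<omega>. (\<Sum>t<n. eqind X t \<omega>) \<partial>M) / real n"
    unfolding Yn_def by simp
  also have "(\<integral>\<omega>. (\<Sum>t<n. eqind X t \<omega>) \<partial>M) = (\<Sum>t<n. integral\<^sup>L M (eqind X t))"
    by (rule Bochner_Integration.integral_sum) (rule eqind_int)
  also have "\<dots> = real n * a" by (simp add: int_eqind)
  finally show ?thesis using n by simp
qed

definition W :: "nat \<Rightarrow> 'a \<Rightarrow> real" where "W t \<omega> = eqind X t \<omega> - a"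

lemma W_meas[measurable]: "W t \<in> borel_measurable M" unfolding W_def by measurable

lemma W_bound: "\<bar>W t \<omega>\<bar> \<le> 1"
  using a0 a1 by (simp add: W_def eqind_def)

lemma WW_int: "integrable M (\<lambda>\<omega>. W i \<omega> * W j \<omega>)"
proof (rule integrable_const_bound[where B=1])
  show "AE x in M. norm (W i x * W j x) \<le> 1"
    using W_bound[of i] W_bound[of j] by (simp add: abs_mult mult_le_one)
qed simp

lemma prodEE: "i < j \<Longrightarrow> prob (EE i \<inter> EE j) = a * a"
  using keyA[OF EE_P[of i j], of ] probE[of i] by (simp add: Int_commute)

lemma cross_lt: assumes "i < j" shows "(\<integral>\<omega>. W i \<omega> * W j \<omega> \<partial>M) = 0"
proof -
  have "(\<integral>\<omega>. W i \<omega> * W j \<omega> \<partial>M) =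
    (\<integral>\<omega>. indicator (EE i \<inter> EE j) \<omega> - a * indicator (EE i) \<omega> - a * indicator (EE j) \<omega> + a * a \<partial>M)"
    by (intro Bochner_Integration.integral_cong) (auto simp: W_def eqind_def algebra_simps split: split_indicator)
  also have "\<dots> = prob (EE i \<inter> EE j) - a * prob (EE i) - a * prob (EE j) + a * a"
    using EE_sets[of i] EE_sets[of j] ind_int
    by (simp add: Int_absorb2 prob_space)
  also have "\<dots> = 0" using prodEE[OF assms] probE by simp
  finally show ?thesis .
qed

lemma cross: assumes "i \<noteq> j" shows "(\<integral>\<omega>. W i \<omega> * W j \<omega> \<partial>M) = 0"
proof (cases "i < j")
  case True then show ?thesis by (rule cross_lt)
next
  case False
  then have "j < i" using assms by simp
  then show ?thesis using cross_lt[of j i] by (simp add: mult.commute)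
qed

lemma diag: "(\<integral>\<omega>. W i \<omega> * W i \<omega> \<partial>M) = a * (1 - a)"
proof -
  have "(\<integral>\<omega>. W i \<omega> * W i \<omega> \<partial>M) = (\<integral>\<omega>. (1 - 2 * a) * indicator (EE i) \<omega> + a * a \<partial>M)"
    by (intro Bochner_Integration.integral_cong) (auto simp: W_def eqind_def algebra_simps split: split_indicator)
  also have "\<dots> = (1 - 2 * a) * prob (EE i) + a * a"
    using EE_sets[of i] ind_int by (simp add: Int_absorb2 prob_space)
  also have "\<dots> = a * (1 - a)" using probE by (simp add: algebra_simps)
  finally show ?thesis .
qed

lemma var_sum: "(\<integral>\<omega>. (\<Sum>t<n. W t \<omega>)\<^sup>2 \<partial>M) = real n * (a * (1 - a))"
proof -
  have "(\<integral>\<omega>. (\<Sum>t<n. W t \<omega>)\<^sup>2 \<partial>M) = (\<integral>\<omega>. (\<Sum>i<n. \<Sum>j<n. W i \<omega> * W j \<omega>) \<partial>M)"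
    by (simp add: power2_eq_square sum_product)
  also have "\<dots> = (\<Sum>i<n. \<Sum>j<n. (\<integral>\<omega>. W i \<omega> * W j \<omega> \<partial>M))"
    by (simp add: Bochner_Integration.integral_sum WW_int)
  also have "\<dots> = (\<Sum>i<n. \<Sum>j<n. (if i = j then a * (1 - a) else 0))"
    by (intro sum.cong refl) (simp add: cross diag)
  also have "\<dots> = real n * (a * (1 - a))" by simp
  finally show ?thesis .
qed

lemma Yn_W: "n \<ge> 1 \<Longrightarrow> Yn X n \<omega> - a = (\<Sum>t<n. W t \<omega>) / real n"
  by (simp add: Yn_def W_def sum_subtractf field_simps)

lemma Yn_meas[measurable]: "Yn X n \<in> borel_measurable M"
  unfolding Yn_def by measurable

lemma cheb: assumes n: "n \<ge> 1" and e: "\<epsilon> > 0"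
  shows "prob {\<omega>\<in>space M. \<bar>Yn X n \<omega> - a\<bar> > \<epsilon>} \<le> a * (1 - a) / (real n * \<epsilon>\<^sup>2)"
proof -
  have bnd: "\<bar>Yn X n \<omega>\<bar> \<le> 1" for \<omega>
  proof -
    have "\<bar>\<Sum>t<n. eqind X t \<omega>\<bar> \<le> (\<Sum>t<n. \<bar>eqind X t \<omega>\<bar>)" by (rule sum_abs)
    also have "\<dots> \<le> (\<Sum>t<n. 1)" by (intro sum_mono) (rule eqind_bound)
    finally show ?thesis using n by (simp add: Yn_def divide_le_eq_1)
  qed
  have isq: "integrable M (\<lambda>\<omega>. (Yn X n \<omega>)\<^sup>2)"
  proof (rule integrable_const_bound[where B=1])
    show "AE x in M. norm ((Yn X n x)\<^sup>2) \<le> 1"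
      using bnd by (simp add: abs_square_le_1)
  qed simp
  have ch: "prob {\<omega>\<in>space M. \<bar>Yn X n \<omega> - expectation (Yn X n)\<bar> \<ge> \<epsilon>} \<le> variance (Yn X n) / \<epsilon>\<^sup>2"
    by (rule Chebyshev_inequality[OF Yn_meas isq e])
  have var: "variance (Yn X n) = a * (1 - a) / real n"
  proof -
    have "variance (Yn X n) = (\<integral>\<omega>. ((\<Sum>t<n. W t \<omega>) / real n)\<^sup>2 \<partial>M)"
      using int_Yn[OF n] Yn_W[OF n] by simp
    also have "\<dots> = (\<integral>\<omega>. (\<Sum>t<n. W t \<omega>)\<^sup>2 \<partial>M) / (real n)\<^sup>2"
      by (simp add: power_divide)
    also have "\<dots> = a * (1 - a) / real n" unfolding var_sum using n by (simp add: power2_eq_square)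
    finally show ?thesis .
  qed
  have "prob {\<omega>\<in>space M. \<bar>Yn X n \<omega> - a\<bar> > \<epsilon>} \<le> prob {\<omega>\<in>space M. \<bar>Yn X n \<omega> - a\<bar> \<ge> \<epsilon>}"
    by (intro finite_measure_mono) auto
  also have "\<dots> \<le> a * (1 - a) / real n / \<epsilon>\<^sup>2" using ch var int_Yn[OF n] by simp
  finally show ?thesis by simp
qed

lemma wlln: assumes e: "\<epsilon> > 0"
  shows "(\<lambda>n. prob {\<omega>\<in>space M. \<bar>Yn X n \<omega> - a\<bar> > \<epsilon>}) \<longlonglongrightarrow> 0"
proof (rule tendsto_sandwich[of "\<lambda>_. 0" _ _ "\<lambda>n. (a * (1 - a) / \<epsilon>\<^sup>2) / real n"])
  show "\<forall>\<^sub>F n in sequentially. 0 \<le> prob {\<omega>\<in>space M. \<bar>Yn X n \<omega> - a\<bar> > \<epsilon>}" by simp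
  show "\<forall>\<^sub>F n in sequentially. prob {\<omega>\<in>space M. \<bar>Yn X n \<omega> - a\<bar> > \<epsilon>} \<le> (a * (1 - a) / \<epsilon>\<^sup>2) / real n"
    using eventually_ge_at_top[of 1]
  proof eventually_elim
    case (elim n) then show ?case using cheb[OF elim e] by (simp add: field_simps)
  qed
  show "(\<lambda>n. a * (1 - a) / \<epsilon>\<^sup>2 / real n) \<longlonglongrightarrow> 0" by (rule lim_const_over_n)
qed simp

end


lemma cdf_scale:
  fixes M :: "'a measure" and f :: "'a \<Rightarrow> real"
  assumes f: "f \<in> borel_measurable M" and s: "\<sigma> > 0"
  shows "cdf (distr M borel (\<lambda>\<omega>. \<sigma> * f \<omega>)) x = cdf (distr M borel f) (x / \<sigma>)"
proof -
  have fs: "(\<lambda>\<omega>. \<sigma> * f \<omega>) \<in> borel_measurable M" using f by measurable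
  have "(\<lambda>\<omega>. \<sigma> * f \<omega>) -` {..x} \<inter> space M = f -` {..x/\<sigma>} \<inter> space M"
    using s by (auto simp: pos_le_divide_eq mult.commute)
  then show ?thesis unfolding cdf_def using measure_distr[OF fs, of "{..x}"] measure_distr[OF f, of "{..x/\<sigma>}"]
    by simp
qed

lemma cdf_normal_scale:
  assumes s: "\<sigma> > 0"
  shows "cdf (density lborel (normal_density 0 \<sigma>)) x = cdf std_normal_distribution (x / \<sigma>)"
proof -
  interpret S: prob_space std_normal_distribution
    using real_dist_normal_dist by (simp add: real_distribution_def)
  have d0: "distributed std_normal_distribution lborel (\<lambda>x. x) (\<lambda>x. ennreal (normal_density 0 1 x))"
    unfolding distributed_def by (simp add: distr_id2)
  have "distributed std_normal_distribution lborel (\<lambda>x. 0 + \<sigma> * x) (\<lambda>x. ennreal (normal_density (0 + \<sigma> * 0) (\<bar>\<sigma>\<bar> * 1) x))"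
    by (rule S.normal_density_affine[OF d0]) (use s in auto)
  then have d: "distr std_normal_distribution lborel (\<lambda>x. \<sigma> * x) = density lborel (normal_density 0 \<sigma>)"
    using s unfolding distributed_def by simp
  have m: "(\<lambda>x. \<sigma> * x) \<in> measurable std_normal_distribution lborel" by simp
  have "cdf (density lborel (normal_density 0 \<sigma>)) x = measure std_normal_distribution ((\<lambda>z. \<sigma> * z) -` {..x} \<inter> space std_normal_distribution)"
    unfolding cdf_def d[symmetric] by (rule measure_distr[OF m]) simp
  also have "(\<lambda>z. \<sigma> * z) -` {..x} \<inter> space std_normal_distribution = {..x/\<sigma>}"
    using s by (auto simp: pos_le_divide_eq mult.commute)
  finally show ?thesis unfolding cdf_def .
qed

context mchain
begin

lemma eqind_comp: "eqind X = (\<lambda>i \<omega>. (\<lambda>b. if b then 1 else 0::real) (X i \<omega> = X (Suc i) \<omega>))"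
  by (simp add: eqind_def fun_eq_iff)

lemma indep_eqind: "indep_vars (\<lambda>_. borel) (eqind X) UNIV"
  unfolding eqind_comp
  by (rule indep_vars_compose2[OF indep_D]) simp

lemma distr_eqind: "distr M borel (eqind X n) = distr (measure_pmf (bernoulli_pmf a)) borel (\<lambda>b. if b then 1 else 0::real)"
proof -
  have "distr M borel (eqind X n) = distr M borel ((\<lambda>b. if b then 1 else 0::real) \<circ> (\<lambda>\<omega>. X n \<omega> = X (Suc n) \<omega>))"
    by (simp add: eqind_comp comp_def)
  also have "\<dots> = distr (distr M (count_space UNIV) (\<lambda>\<omega>. X n \<omega> = X (Suc n) \<omega>)) borel (\<lambda>b. if b then 1 else 0::real)"
    by (rule distr_distr[symmetric]) (simp_all add: D_rv)
  also have "\<dots> = distr (measure_pmf (bernoulli_pmf a)) borel (\<lambda>b. if b then 1 else 0::real)"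
    by (simp only: distr_D)
  finally show ?thesis .
qed

definition sig :: real where "sig = sqrt (a * (1 - a))"

lemma sig_pos: "sig > 0" unfolding sig_def using a0 a1 by simp

lemma sig_sq: "sig\<^sup>2 = a * (1 - a)" unfolding sig_def using a0 a1 by simp

lemma clt0: "weak_conv_m (\<lambda>n. distr M borel (\<lambda>x. (\<Sum>i<n. eqind X i x - a) / sqrt (n * sig\<^sup>2))) std_normal_distribution"
proof (rule central_limit_theorem[where X="eqind X" and m=a and \<sigma>=sig
      and \<mu>="distr (measure_pmf (bernoulli_pmf a)) borel (\<lambda>b. if b then 1 else 0::real)"])
  show "indep_vars (\<lambda>i. borel) (eqind X) UNIV" by (rule indep_eqind)
  show "\<And>n. expectation (eqind X n) = a" by (rule int_eqind)
  show "0 < sig" by (rule sig_pos)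
  show "\<And>n. integrable M (\<lambda>x. (eqind X n x)\<^sup>2)"
  proof -
    fix n show "integrable M (\<lambda>x. (eqind X n x)\<^sup>2)"
      by (rule integrable_const_bound[where B=1]) (simp_all add: eqind_def)
  qed
  show "\<And>n. variance (eqind X n) = sig\<^sup>2"
  proof -
    fix n
    have "variance (eqind X n) = (\<integral>\<omega>. W n \<omega> * W n \<omega> \<partial>M)"
      by (simp add: int_eqind W_def power2_eq_square)
    then show "variance (eqind X n) = sig\<^sup>2" using diag sig_sq by simp
  qed
  show "\<And>n. distr M borel (eqind X n) = distr (measure_pmf (bernoulli_pmf a)) borel (\<lambda>b. if b then 1 else 0::real)"
    by (rule distr_eqind)
qed

lemma scale_eq: "sqrt (real n) * (Yn X n \<omega> - a) = sig * ((\<Sum>i<n. eqind X i \<omega> - a) / sqrt (n * sig\<^sup>2))"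
proof (cases "n = 0")
  case True then show ?thesis by (simp add: Yn_def)
next
  case False
  then have n: "n \<ge> 1" by simp
  have s: "sqrt (real n * sig\<^sup>2) = sqrt (real n) * sig" using sig_pos by (simp add: real_sqrt_mult)
  have "sqrt (real n) * (Yn X n \<omega> - a) = sqrt (real n) * ((\<Sum>i<n. W i \<omega>) / real n)" using Yn_W[OF n] by simp
  also have "\<dots> = (\<Sum>i<n. W i \<omega>) / sqrt (real n)"
    using n by (simp add: field_simps)
  also have "\<dots> = sig * ((\<Sum>i<n. eqind X i \<omega> - a) / sqrt (n * sig\<^sup>2))"
    unfolding s W_def using sig_pos by (simp add: field_simps)
  finally show ?thesis .
qed

lemma clt: "weak_conv_m (\<lambda>n. distr M borel (\<lambda>\<omega>. sqrt (real n) * (Yn X n \<omega> - a)))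
       (density lborel (normal_density 0 (sqrt (a * (1 - a)))))"
  unfolding weak_conv_m_def weak_conv_def
proof (intro allI impI)
  fix x
  let ?T = "density lborel (normal_density 0 (sqrt (a * (1 - a))))"
  let ?Z = "\<lambda>n x. (\<Sum>i<n. eqind X i x - a) / sqrt (n * sig\<^sup>2)"
  assume c: "isCont (cdf ?T) x"
  have cT: "\<And>y. cdf ?T y = cdf std_normal_distribution (y / sig)"
    using cdf_normal_scale[OF sig_pos] unfolding sig_def .
  have c1: "isCont (\<lambda>y. sig * y) (x / sig)" by (intro continuous_intros)
  have c2: "isCont (cdf ?T) (sig * (x / sig))" using c sig_pos by simp
  have "isCont (\<lambda>y. cdf ?T (sig * y)) (x / sig)"
    by (rule isCont_o2[OF c1 c2])
  moreover have "(\<lambda>y. cdf ?T (sig * y)) = cdf std_normal_distribution"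
  proof (rule ext)
    fix y show "cdf ?T (sig * y) = cdf std_normal_distribution y"
      using cT[of "sig * y"] sig_pos by simp
  qed
  ultimately have cS: "isCont (cdf std_normal_distribution) (x / sig)" by simp
  have lim: "(\<lambda>n. cdf (distr M borel (?Z n)) (x / sig)) \<longlonglongrightarrow> cdf std_normal_distribution (x / sig)"
    using clt0 cS unfolding weak_conv_m_def weak_conv_def by blast
  have eq: "cdf (distr M borel (\<lambda>\<omega>. sqrt (real n) * (Yn X n \<omega> - a))) x = cdf (distr M borel (?Z n)) (x / sig)" for n
  proof -
    have e1: "(\<lambda>\<omega>. sqrt (real n) * (Yn X n \<omega> - a)) = (\<lambda>\<omega>. sig * ?Z n \<omega>)"
      by (rule ext) (rule scale_eq)
    have zm: "?Z n \<in> borel_measurable M"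
      by (intro borel_measurable_divide borel_measurable_sum borel_measurable_diff eqind_meas borel_measurable_const)
    show ?thesis unfolding e1 by (rule cdf_scale[OF zm sig_pos])
  qed
  show "(\<lambda>n. cdf (distr M borel (\<lambda>\<omega>. sqrt (real n) * (Yn X n \<omega> - a))) x) \<longlonglongrightarrow> cdf ?T x"
    unfolding eq cT[of x] using lim .
qed

end

theorem proposition2:
  fixes M :: "'a measure" and X :: "nat \<Rightarrow> 'a \<Rightarrow> real" and a :: real
  assumes a: "0 < a" "a < 1"
    and mc: "markov_chain M X"
    and st: "stationary M X"
    and gen: "generated_by M X (mix_copula a) unif_cdf"
  shows
    "(\<forall>n. prob_space.indep_vars M (\<lambda>_. count_space UNIV)
            (\<lambda>t \<omega>. X t \<omega> = X (Suc t) \<omega>) {..<n})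
   \<and> (\<forall>t. distr M (count_space UNIV) (\<lambda>\<omega>. X t \<omega> = X (Suc t) \<omega>)
            = measure_pmf (bernoulli_pmf a))
   \<and> (\<forall>n\<ge>1. integral\<^sup>L M (Yn X n) = a)
   \<and> (\<forall>\<epsilon>>0. (\<lambda>n. measure M {\<omega>\<in>space M. \<bar>Yn X n \<omega> - a\<bar> > \<epsilon>})
            \<longlonglongrightarrow> 0)
   \<and> weak_conv_m (\<lambda>n. distr M borel (\<lambda>\<omega>. sqrt (real n) * (Yn X n \<omega> - a)))
       (density lborel (normal_density 0 (sqrt (a * (1 - a)))))
   \<and> (\<forall>n\<ge>1. \<forall>\<omega>\<in>space M.
        is_arg_max (likelihood X n \<omega>) (\<lambda>b. b \<in> {0..1}) (Yn X n \<omega>)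
      \<and> (\<forall>b\<in>{0..1}. likelihood X n \<omega> b = likelihood X n \<omega> (Yn X n \<omega>) \<longrightarrow> b = Yn X n \<omega>))"
proof -
  interpret mchain M X a using a mc gen by unfold_locales
  show ?thesis
  proof (intro conjI allI impI ballI)
    fix n :: nat
    show "indep_vars (\<lambda>_. count_space UNIV) (\<lambda>t \<omega>. X t \<omega> = X (Suc t) \<omega>) {..<n}"
      by (rule indep_vars_subset[OF indep_D]) simp
  next
    fix t show "distr M (count_space UNIV) (\<lambda>\<omega>. X t \<omega> = X (Suc t) \<omega>) = measure_pmf (bernoulli_pmf a)"
      by (rule distr_D)
  next
    fix n :: nat assume "n \<ge> 1" then show "integral\<^sup>L M (Yn X n) = a" by (rule int_Yn)
  next
    fix \<epsilon> :: real assume "\<epsilon> > 0" then show "(\<lambda>n. prob {\<omega>\<in>space M. \<bar>Yn X n \<omega> - a\<bar> > \<epsilon>}) \<longlonglongrightarrow> 0"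
      by (rule wlln)
  next
    show "weak_conv_m (\<lambda>n. distr M borel (\<lambda>\<omega>. sqrt (real n) * (Yn X n \<omega> - a)))
       (density lborel (normal_density 0 (sqrt (a * (1 - a)))))" by (rule clt)
  next
    fix n :: nat and \<omega> assume n: "n \<ge> 1"
    show "is_arg_max (likelihood X n \<omega>) (\<lambda>b. b \<in> {0..1}) (Yn X n \<omega>)"
      using mle[OF n, where X=X and \<omega>=\<omega>] by (rule conjunct1)
  next
    fix n :: nat and \<omega> b assume n: "n \<ge> 1" and b: "b \<in> {0..1}" and l: "likelihood X n \<omega> b = likelihood X n \<omega> (Yn X n \<omega>)"
    have "\<forall>b\<in>{0..1}. likelihood X n \<omega> b = likelihood X n \<omega> (Yn X n \<omega>) \<longrightarrow> b = Yn X n \<omega>"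
      using mle[OF n, where X=X and \<omega>=\<omega>] by (rule conjunct2)
    then show "b = Yn X n \<omega>" using b l by blast
  qed
qed


end
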